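(* Let $X$ be a Banach lattice and $E_1,E_2\colon X\to\mathbb R\cup\{+\infty\}$ two proper convex functions such that $E_1\ll_{\mathrm P}E_2$. Then $E_2^*\ll_{\mathrm Q}E_1^*$. In particular, if $E\colon X\to\mathbb R\cup\{+\infty\}$ is a submodular proper convex function, then $E^*$ is substitutable.
   Context: A Banach lattice is a Banach space with a lattice partial order (inf/sup $\wedge,\vee$) compatible with addition and nonnegative scaling and with $|\phi_1|\leq|\phi_2|\Rightarrow\|\phi_1\|\leq\|\phi_2\|$ ($\phi^+=\phi\vee0$, $\phi^-=-(\phi\wedge0)$, $|\phi|=\phi^++\phi^-$). $X^*$ carries the dual order ($\mu\leq\nu$ iff $\langle\mu,\phi\rangle\leq\langle\nu,\phi\rangle$ for all $\phi\geq0$), making it a Banach lattice; $[a,b]=\{m:a\leq m\leq b\}$. $E^*(\mu)=\sup_{\phi\in X}\langle\mu,\phi\rangle-E(\phi)$. $E_1\ll_{\mathrm P}E_2$ means $E_1(\phi_1\wedge\phi_2)+E_2(\phi_1\vee\phi_2)\leq E_1(\phi_1)+E_2(\phi_2)$ for all $\phi_1,\phi_2$; $E$ is submodular if $E\ll_{\mathrm P}E$. For $F_1,F_2\colon X^*\to\mathbb R\cup\{+\infty\}$, $F_2\ll_{\mathrm Q}F_1$ means: for all $\mu_1,\mu_2\in X^*$ and every $t_{21}\in[0,(\mu_2-\mu_1)^+]$ there exists $t_{12}\in[0,(\mu_1-\mu_2)^+]$ with $F_1(\mu_1+t_{21}-t_{12})+F_2(\mu_2-t_{21}+t_{12})\leq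 F_1(\mu_1)+F_2(\mu_2)$; $F$ is substitutable if $F\ll_{\mathrm Q}F$. *)

theory Defs
  imports "HOL-Analysis.Analysis"
begin

text \<open>Banach lattice: a Banach space whose order is a lattice order compatible with
  addition and nonnegative scaling (type classes banach, lattice, ordered_real_vector
  share one order), with the norm monotone in the modulus.\<close>

definition pos_part :: "'a::{lattice,ab_group_add} \<Rightarrow> 'a" where
  "pos_part x = sup x 0"

definition neg_part :: "'a::{lattice,ab_group_add} \<Rightarrow> 'a" where
  "neg_part x = - inf x 0"

definition lat_abs :: "'a::{lattice,ab_group_add} \<Rightarrow> 'a" where
  "lat_abs x = pos_part x + neg_part x"

definition banach_lattice :: "'a::{banach,lattice,ordered_real_vector} itself \<Rightarrow> bool" where
  "banach_lattice _ \<longleftrightarrow> (\<forall>x y::'a. lat_abs x \<le> lat_abs y \<longrightarrow> norm x \<le> norm y)"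

definition dual_le :: "('a::{real_normed_vector,order} \<Rightarrow>\<^sub>L real) \<Rightarrow> ('a \<Rightarrow>\<^sub>L real) \<Rightarrow> bool" where
  "dual_le \<mu> \<nu> \<longleftrightarrow> (\<forall>\<phi>. 0 \<le> \<phi> \<longrightarrow> blinfun_apply \<mu> \<phi> \<le> blinfun_apply \<nu> \<phi>)"

definition dual_pos :: "('a::{real_normed_vector,order} \<Rightarrow>\<^sub>L real) \<Rightarrow> ('a \<Rightarrow>\<^sub>L real)" where
  "dual_pos \<mu> = (THE p. dual_le \<mu> p \<and> dual_le 0 p \<and>
      (\<forall>q. dual_le \<mu> q \<and> dual_le 0 q \<longrightarrow> dual_le p q))"

definition proper_fun :: "('b \<Rightarrow> ereal) \<Rightarrow> bool" where
  "proper_fun E \<longleftrightarrow> (\<forall>x. E x \<noteq> -\<infinity>) \<and> (\<exists>x. E x \<noteq> \<infinity>)"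

definition convex_fun :: "('b::real_vector \<Rightarrow> ereal) \<Rightarrow> bool" where
  "convex_fun E \<longleftrightarrow> (\<forall>x y t. 0 < t \<and> t < 1 \<longrightarrow>
      E ((1 - t) *\<^sub>R x + t *\<^sub>R y) \<le> ereal (1 - t) * E x + ereal t * E y)"

definition conj_fun :: "('a::real_normed_vector \<Rightarrow> ereal) \<Rightarrow> ('a \<Rightarrow>\<^sub>L real) \<Rightarrow> ereal" where
  "conj_fun E \<mu> = (SUP \<phi>. ereal (blinfun_apply \<mu> \<phi>) - E \<phi>)"

definition P_rel :: "('a::lattice \<Rightarrow> ereal) \<Rightarrow> ('a \<Rightarrow> ereal) \<Rightarrow> bool" where
  "P_rel E1 E2 \<longleftrightarrow> (\<forall>\<phi>1 \<phi>2. E1 (inf \<phi>1 \<phi>2) + E2 (sup \<phi>1 \<phi>2) \<le> E1 \<phi>1 + E2 \<phi>2)"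

definition submodular :: "('a::lattice \<Rightarrow> ereal) \<Rightarrow> bool" where
  "submodular E \<longleftrightarrow> P_rel E E"

definition Q_rel :: "(('a::{real_normed_vector,order} \<Rightarrow>\<^sub>L real) \<Rightarrow> ereal) \<Rightarrow> (('a \<Rightarrow>\<^sub>L real) \<Rightarrow> ereal) \<Rightarrow> bool" where
  "Q_rel F2 F1 \<longleftrightarrow> (\<forall>\<mu>1 \<mu>2 t21. dual_le 0 t21 \<and> dual_le t21 (dual_pos (\<mu>2 - \<mu>1)) \<longrightarrow>
      (\<exists>t12. dual_le 0 t12 \<and> dual_le t12 (dual_pos (\<mu>1 - \<mu>2)) \<and>
         F1 (\<mu>1 + t21 - t12) + F2 (\<mu>2 - t21 + t12) \<le> F1 \<mu>1 + F2 \<mu>2))"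

definition substitutable :: "(('a::{real_normed_vector,order} \<Rightarrow>\<^sub>L real) \<Rightarrow> ereal) \<Rightarrow> bool" where
  "substitutable F \<longleftrightarrow> Q_rel F F"

end

theory Submission
  imports Defs
begin

definition lgraph :: "('a::real_vector \<Rightarrow> real) \<Rightarrow> ('a \<times> real) set \<Rightarrow> bool" where
  "lgraph p G \<longleftrightarrow> (0,0) \<in> G \<and> (\<forall>x a b. (x,a)\<in>G \<longrightarrow> (x,b)\<in>G \<longrightarrow> a = b)
     \<and> (\<forall>x a y b. (x,a)\<in>G \<longrightarrow> (y,b)\<in>G \<longrightarrow> (x+y,a+b)\<in>G)
     \<and> (\<forall>x a r. (x,a)\<in>G \<longrightarrow> (r *\<^sub>R x, r*a)\<in>G)
     \<and> (\<forall>x a. (x,a)\<in>G \<longrightarrow> a \<le> p x)"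

lemma lgraphD:
  assumes "lgraph p G"
  shows "(0,0) \<in> G" "\<And>x a b. (x,a)\<in>G \<Longrightarrow> (x,b)\<in>G \<Longrightarrow> a = b"
    "\<And>x a y b. (x,a)\<in>G \<Longrightarrow> (y,b)\<in>G \<Longrightarrow> (x+y,a+b)\<in>G"
    "\<And>x a r. (x,a)\<in>G \<Longrightarrow> (r *\<^sub>R x, r*a)\<in>G"
    "\<And>x a. (x,a)\<in>G \<Longrightarrow> a \<le> p x"
  using assms unfolding lgraph_def by blast+

lemma lgraphI:
  assumes "(0,0) \<in> G" "\<And>x a b. (x,a)\<in>G \<Longrightarrow> (x,b)\<in>G \<Longrightarrow> a = b"
    "\<And>x a y b. (x,a)\<in>G \<Longrightarrow> (y,b)\<in>G \<Longrightarrow> (x+y,a+b)\<in>G"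
    "\<And>x a r. (x,a)\<in>G \<Longrightarrow> (r *\<^sub>R x, r*a)\<in>G"
    "\<And>x a. (x,a)\<in>G \<Longrightarrow> a \<le> p x"
  shows "lgraph p G"
  using assms unfolding lgraph_def by blast

lemma lgraph_chain:
  assumes C: "C \<in> chains {G. lgraph p G}" and p0: "0 \<le> p 0"
  shows "\<exists>U\<in>{G. lgraph p G}. \<forall>X\<in>C. X \<subseteq> U"
proof (cases "C = {}")
  case True
  have "lgraph p {(0,0)}" by (rule lgraphI) (auto simp: p0)
  then show ?thesis using True by auto
next
  case False
  have sub: "\<And>X. X \<in> C \<Longrightarrow> lgraph p X" and ch: "\<And>X Y. X\<in>C \<Longrightarrow> Y\<in>C \<Longrightarrow> X \<subseteq> Y \<or> Y \<subseteq> X"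
    using C by (auto simp: chains_def chain_subset_def)
  have two: "\<exists>Z\<in>C. u \<in> Z \<and> v \<in> Z" if uv: "u \<in> \<Union>C" "v \<in> \<Union>C" for u v
  proof -
    obtain X Y where XY: "X\<in>C" "Y\<in>C" "u\<in>X" "v\<in>Y" using uv by auto
    show ?thesis using ch[OF XY(1,2)] XY by blast
  qed
  have "lgraph p (\<Union>C)"
  proof (rule lgraphI)
    obtain G0 where "G0 \<in> C" using False by auto
    then show "(0,0) \<in> \<Union>C" using sub lgraphD(1) by blast
  next
    fix x a b assume "(x,a)\<in>\<Union>C" "(x,b)\<in>\<Union>C"
    then obtain Z where "Z \<in> C" "(x,a)\<in>Z" "(x,b)\<in>Z" using two by blast
    then show "a = b" using sub lgraphD(2) by blast
  next
    fix x a y b assume "(x,a)\<in>\<Union>C" "(y,b)\<in>\<Union>C"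
    then obtain Z where "Z \<in> C" "(x,a)\<in>Z" "(y,b)\<in>Z" using two by blast
    then show "(x+y,a+b)\<in>\<Union>C" using sub lgraphD(3) by blast
  next
    fix x a r assume "(x,a)\<in>\<Union>C"
    then obtain Z where "Z \<in> C" "(x,a)\<in>Z" by blast
    then show "(r *\<^sub>R x, r*a)\<in>\<Union>C" using sub lgraphD(4) by blast
  next
    fix x a assume "(x,a)\<in>\<Union>C"
    then obtain Z where "Z \<in> C" "(x,a)\<in>Z" by blast
    then show "a \<le> p x" using sub lgraphD(5) by blast
  qed
  then show ?thesis by auto
qed

lemma lgraph_extend:
  fixes p :: "'a::real_vector \<Rightarrow> real"
  assumes G: "lgraph p G"
    and conv: "\<forall>x y \<theta>. 0<\<theta> \<longrightarrow> \<theta><1 \<longrightarrow> p ((1-\<theta>) *\<^sub>R x + \<theta> *\<^sub>R y) \<le> (1-\<theta>) * p x + \<theta> * p y"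
    and z: "\<forall>a. (z,a) \<notin> G"
  shows "\<exists>G'. lgraph p G' \<and> G \<subseteq> G' \<and> G' \<noteq> G"
proof -
  have key: "la*a' + mu*a \<le> la * p (w' - mu *\<^sub>R z) + mu * p (w + la *\<^sub>R z)"
    if wa: "(w,a)\<in>G" "(w',a')\<in>G" and lm: "la > 0" "mu > 0" for w a w' a' la mu
  proof -
    define s where "s = la + mu"
    define \<theta> where "\<theta> = mu / s"
    have s0: "s > 0" using lm by (simp add: s_def)
    have th: "0 < \<theta>" "\<theta> < 1" using lm by (auto simp: \<theta>_def s_def field_simps)
    have "(la *\<^sub>R w' + mu *\<^sub>R w, la*a' + mu*a) \<in> G"
      using lgraphD(3)[OF G lgraphD(4)[OF G wa(2)] lgraphD(4)[OF G wa(1)]] .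
    then have mem: "((1/s) *\<^sub>R (la *\<^sub>R w' + mu *\<^sub>R w), (1/s)*(la*a' + mu*a)) \<in> G"
      by (rule lgraphD(4)[OF G])
    have le1: "(1/s)*(la*a' + mu*a) \<le> p ((1/s) *\<^sub>R (la *\<^sub>R w' + mu *\<^sub>R w))"
      using lgraphD(5)[OF G mem] .
    have eq: "(la/s) *\<^sub>R (w' - mu *\<^sub>R z) + (mu/s) *\<^sub>R (w + la *\<^sub>R z) = (1/s) *\<^sub>R (la *\<^sub>R w' + mu *\<^sub>R w)"
    proof -
      have "(la/s) *\<^sub>R (w' - mu *\<^sub>R z) + (mu/s) *\<^sub>R (w + la *\<^sub>R z) = (la/s) *\<^sub>R w' + (mu/s) *\<^sub>R w + ((mu/s)*la - (la/s)*mu) *\<^sub>R z"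
        by (simp add: scaleR_diff_right scaleR_add_right scaleR_diff_left)
      also have "\<dots> = (1/s) *\<^sub>R (la *\<^sub>R w' + mu *\<^sub>R w)" by (simp add: scaleR_add_right)
      finally show ?thesis .
    qed
    have a: "1 - \<theta> = la/s" using s0 by (simp add: \<theta>_def s_def field_simps)
    have le2: "p ((1/s) *\<^sub>R (la *\<^sub>R w' + mu *\<^sub>R w)) \<le> (la/s) * p (w' - mu *\<^sub>R z) + (mu/s) * p (w + la *\<^sub>R z)"
    proof -
      have le2': "p ((1-\<theta>) *\<^sub>R (w' - mu *\<^sub>R z) + \<theta> *\<^sub>R (w + la *\<^sub>R z)) \<le> (1-\<theta>) * p (w' - mu *\<^sub>R z) + \<theta> * p (w + la *\<^sub>R z)"
        using conv th by blast
      show ?thesis using le2'[unfolded a, unfolded \<theta>_def eq] .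
    qed
    have "(1/s)*(la*a' + mu*a) \<le> (la/s) * p (w' - mu *\<^sub>R z) + (mu/s) * p (w + la *\<^sub>R z)"
      using le1 le2 by linarith
    then have "s*((1/s)*(la*a' + mu*a)) \<le> s*((la/s) * p (w' - mu *\<^sub>R z) + (mu/s) * p (w + la *\<^sub>R z))"
      using s0 by (intro mult_left_mono) auto
    moreover have "s*((1/s)*(la*a' + mu*a)) = la*a' + mu*a" using s0 by simp
    moreover have "s*((la/s) * p (w' - mu *\<^sub>R z) + (mu/s) * p (w + la *\<^sub>R z)) = la * p (w' - mu *\<^sub>R z) + mu * p (w + la *\<^sub>R z)"
      using s0 by (simp add: distrib_left)
    ultimately show ?thesis by simp
  qed
  define L where "L = {(a' - p (w' - mu *\<^sub>R z))/mu | w' a' mu. (w',a')\<in>G \<and> mu > 0}"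
  have ub: "l \<le> (p (w + la *\<^sub>R z) - a)/la" if lL: "l \<in> L" and wa: "(w,a)\<in>G" and la0: "la > 0" for l w a la
  proof -
    obtain w' a' mu where l: "l = (a' - p (w' - mu *\<^sub>R z))/mu" "(w',a')\<in>G" "mu > 0"
      using lL unfolding L_def by blast
    have "la*a' + mu*a \<le> la * p (w' - mu *\<^sub>R z) + mu * p (w + la *\<^sub>R z)"
      using key[OF wa l(2) la0 l(3)] .
    moreover have a'eq: "a' = l*mu + p (w' - mu *\<^sub>R z)" using l(1) l(3) by (simp add: field_simps)
    ultimately have "mu*(a + l*la) \<le> mu * p (w + la *\<^sub>R z)" by (simp add: algebra_simps)
    then have "a + l*la \<le> p (w + la *\<^sub>R z)" using l(3) by simp
    then show ?thesis using la0 by (simp add: field_simps)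
  qed
  have "(0 - p (0 - 1 *\<^sub>R z))/1 \<in> L" unfolding L_def using lgraphD(1)[OF G] zero_less_one by blast
  then have Lne: "L \<noteq> {}" by auto
  have Lbdd: "bdd_above L"
    unfolding bdd_above_def using ub[OF _ lgraphD(1)[OF G], of _ 1] by auto
  define c where "c = Sup L"
  have c_le: "c \<le> (p (w + la *\<^sub>R z) - a)/la" if "(w,a)\<in>G" "la > 0" for w a la
    unfolding c_def using Lne ub that by (intro cSup_least) auto
  have le_c: "(a' - p (w' - mu *\<^sub>R z))/mu \<le> c" if w'a': "(w',a')\<in>G" "mu > 0" for w' a' mu
  proof -
    have "(a' - p (w' - mu *\<^sub>R z))/mu \<in> L" unfolding L_def using w'a' by blast
    then show ?thesis unfolding c_def using Lbdd by (rule cSup_upper)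
  qed
  define G' where "G' = {(w + la *\<^sub>R z, a + la*c) | w a la. (w,a)\<in>G}"
  have "lgraph p G'"
  proof (rule lgraphI)
    show "(0,0) \<in> G'" unfolding G'_def using lgraphD(1)[OF G] by force
  next
    fix x b1 b2 assume B: "(x,b1)\<in>G'" "(x,b2)\<in>G'"
    obtain w1 a1 l1 where A1: "x = w1 + l1 *\<^sub>R z" "b1 = a1 + l1*c" "(w1,a1)\<in>G"
      using B(1) unfolding G'_def by blast
    obtain w2 a2 l2 where A2: "x = w2 + l2 *\<^sub>R z" "b2 = a2 + l2*c" "(w2,a2)\<in>G"
      using B(2) unfolding G'_def by blast
    note A = A1 A2
    have "l1 = l2"
    proof (rule ccontr)
      assume ne: "l1 \<noteq> l2"
      have "(w2 + (-1) *\<^sub>R w1, a2 + (-1)*a1) \<in> G"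
        using lgraphD(3)[OF G A(6) lgraphD(4)[OF G A(3)]] .
      then have "((1/(l1-l2)) *\<^sub>R (w2 + (-1) *\<^sub>R w1), (1/(l1-l2))*(a2 + (-1)*a1)) \<in> G"
        by (rule lgraphD(4)[OF G])
      moreover have "(1/(l1-l2)) *\<^sub>R (w2 + (-1) *\<^sub>R w1) = z"
      proof -
        have "w2 - w1 = (l1 - l2) *\<^sub>R z" using A(1,4) by (simp add: algebra_simps)
        then show ?thesis using ne by simp
      qed
      ultimately show False using z by auto
    qed
    then have "w1 = w2" using A by simp
    then have "a1 = a2" using lgraphD(2)[OF G A(3)] A(6) by simp
    then show "b1 = b2" using A \<open>l1 = l2\<close> by simp
  next
    fix x b y d assume B: "(x,b)\<in>G'" "(y,d)\<in>G'"
    obtain w1 a1 l1 where A1: "x = w1 + l1 *\<^sub>R z" "b = a1 + l1*c" "(w1,a1)\<in>G"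
      using B(1) unfolding G'_def by blast
    obtain w2 a2 l2 where A2: "y = w2 + l2 *\<^sub>R z" "d = a2 + l2*c" "(w2,a2)\<in>G"
      using B(2) unfolding G'_def by blast
    note A = A1 A2
    have "(w1+w2, a1+a2) \<in> G" using lgraphD(3)[OF G A(3) A(6)] .
    moreover have "x + y = (w1+w2) + (l1+l2) *\<^sub>R z" "b + d = (a1+a2) + (l1+l2)*c"
      using A by (simp_all add: algebra_simps)
    ultimately show "(x+y,b+d)\<in>G'" unfolding G'_def by blast
  next
    fix x b r assume "(x,b)\<in>G'"
    then obtain w1 a1 l1 where A: "x = w1 + l1 *\<^sub>R z" "b = a1 + l1*c" "(w1,a1)\<in>G"
      unfolding G'_def by blast
    have "(r *\<^sub>R w1, r*a1) \<in> G" using lgraphD(4)[OF G A(3)] .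
    moreover have "r *\<^sub>R x = r *\<^sub>R w1 + (r*l1) *\<^sub>R z" "r*b = r*a1 + (r*l1)*c"
      using A by (simp_all add: algebra_simps)
    ultimately show "(r *\<^sub>R x, r*b)\<in>G'" unfolding G'_def by blast
  next
    fix x b assume "(x,b)\<in>G'"
    then obtain w a l where A: "x = w + l *\<^sub>R z" "b = a + l*c" "(w,a)\<in>G"
      unfolding G'_def by blast
    consider "l > 0" | "l = 0" | "l < 0" by linarith
    then show "b \<le> p x"
    proof cases
      case 1
      have "c \<le> (p (w + l *\<^sub>R z) - a)/l" using c_le[OF A(3) 1] .
      then show ?thesis using A 1 by (simp add: field_simps)
    next
      case 2
      then show ?thesis using A lgraphD(5)[OF G A(3)] by simp
    next
      case 3
      have "(a - p (w - (-l) *\<^sub>R z))/(-l) \<le> c" using le_c[OF A(3), of "-l"] 3 by linarith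
      moreover have "w - (-l) *\<^sub>R z = w + l *\<^sub>R z" by simp
      ultimately have "(a - p (w + l *\<^sub>R z))/(-l) \<le> c" by simp
      then show ?thesis using A 3 by (simp add: field_simps)
    qed
  qed
  moreover have "G \<subseteq> G'"
  proof
    fix u assume "u \<in> G"
    then obtain w a where "u = (w,a)" "(w,a)\<in>G" by (cases u) auto
    then have "(w + 0 *\<^sub>R z, a + 0*c) \<in> G'" unfolding G'_def by blast
    then show "u \<in> G'" using \<open>u = (w,a)\<close> by simp
  qed
  moreover have "(z, c) \<in> G'"
  proof -
    have "(0 + 1 *\<^sub>R z, 0 + 1*c) \<in> G'" unfolding G'_def using lgraphD(1)[OF G] by blast
    then show ?thesis by simp
  qed
  ultimately show ?thesis using z by blast
qed

lemma hahn_banach_convex: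
  fixes p :: "'a::real_vector \<Rightarrow> real"
  assumes conv: "\<forall>x y \<theta>. 0<\<theta> \<longrightarrow> \<theta><1 \<longrightarrow> p ((1-\<theta>) *\<^sub>R x + \<theta> *\<^sub>R y) \<le> (1-\<theta>) * p x + \<theta> * p y"
    and p0: "0 \<le> p 0"
  shows "\<exists>f. (\<forall>x y. f (x+y) = f x + f y) \<and> (\<forall>r x. f (r *\<^sub>R x) = r * f x) \<and> (\<forall>x. f x \<le> p x)"
proof -
  obtain M where M: "M \<in> {G. lgraph p G}" and max: "\<forall>X\<in>{G. lgraph p G}. M \<subseteq> X \<longrightarrow> X = M"
    using Zorn_Lemma2[of "{G. lgraph p G}"] lgraph_chain[of _ p] p0 by blast
  have LM: "lgraph p M" using M by simp
  have tot: "\<exists>a. (z,a)\<in>M" for z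
  proof (rule ccontr)
    assume "\<nexists>a. (z,a)\<in>M"
    then obtain G' where "lgraph p G'" "M \<subseteq> G'" "G' \<noteq> M"
      using lgraph_extend[OF LM conv] by blast
    then show False using max by blast
  qed
  define f where "f z = (THE a. (z,a)\<in>M)" for z
  have fM: "(z, f z) \<in> M" for z
  proof -
    have "\<exists>!a. (z,a)\<in>M" using tot lgraphD(2)[OF LM] by blast
    then show ?thesis unfolding f_def by (rule theI')
  qed
  have "f (x+y) = f x + f y" for x y
    using lgraphD(2)[OF LM lgraphD(3)[OF LM fM fM] fM] by simp
  moreover have "f (r *\<^sub>R x) = r * f x" for r x
    using lgraphD(2)[OF LM lgraphD(4)[OF LM fM] fM] by simp
  moreover have "f x \<le> p x" for x using lgraphD(5)[OF LM fM] .
  ultimately show ?thesis by blast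
qed

lemma add_sup_l: "x + sup y z = sup (x+y) (x+z)" for x :: "'a::{lattice,ordered_ab_group_add}"
proof (rule antisym)
  have "sup y z \<le> sup (x+y) (x+z) - x"
    by (rule sup_least) (simp_all add: le_diff_eq add.commute)
  then show "x + sup y z \<le> sup (x+y) (x+z)" by (simp add: le_diff_eq add.commute)
  show "sup (x+y) (x+z) \<le> x + sup y z" by (rule sup_least) (simp_all add: add_left_mono)
qed

lemma add_inf_l: "x + inf y z = inf (x+y) (x+z)" for x :: "'a::{lattice,ordered_ab_group_add}"
proof (rule antisym)
  have "inf (x+y) (x+z) - x \<le> inf y z"
    by (rule inf_greatest) (simp_all add: diff_le_eq add.commute)
  then show "inf (x+y) (x+z) \<le> x + inf y z" by (metis diff_le_eq add.commute)
  show "x + inf y z \<le> inf (x+y) (x+z)" by (rule inf_greatest) (simp_all add: add_left_mono)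
qed

lemma neg_sup_l: "- sup a b = inf (-a) (-b)" for a :: "'a::{lattice,ordered_ab_group_add}"
proof (rule antisym)
  show "- sup a b \<le> inf (-a) (-b)" by (rule inf_greatest) simp_all
  have "sup a b \<le> - inf (-a) (-b)"
    by (rule sup_least) (metis inf.cobounded1 inf.cobounded2 le_minus_iff)+
  then show "inf (-a) (-b) \<le> - sup a b" by (simp add: le_minus_iff)
qed

lemma neg_inf_l: "- inf a b = sup (-a) (-b)" for a :: "'a::{lattice,ordered_ab_group_add}"
  using neg_sup_l[of "-a" "-b"] by (metis minus_minus)

lemma sup_plus_inf_l: "sup a b + inf a b = a + b" for a :: "'a::{lattice,ordered_ab_group_add}"
proof -
  have "a + b - sup a b = (a + b) + inf (-a) (-b)" by (simp add: neg_sup_l[symmetric])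
  also have "\<dots> = inf b a" by (simp add: add_inf_l algebra_simps)
  finally show ?thesis by (simp add: algebra_simps inf_commute)
qed

lemma pos_minus_neg: "pos_part x - neg_part x = x" for x :: "'a::{lattice,ordered_ab_group_add}"
  unfolding pos_part_def neg_part_def using sup_plus_inf_l[of x 0] by simp

lemma pos_ge0: "0 \<le> pos_part x" for x :: "'a::{lattice,ordered_ab_group_add}"
  unfolding pos_part_def by simp

lemma neg_ge0: "0 \<le> neg_part x" for x :: "'a::{lattice,ordered_ab_group_add}"
  unfolding neg_part_def by simp

lemma pos_of_nonneg: "0 \<le> x \<Longrightarrow> pos_part x = x" for x :: "'a::{lattice,ordered_ab_group_add}"
  unfolding pos_part_def by (simp add: sup_absorb1)

lemma neg_of_nonneg: "0 \<le> x \<Longrightarrow> neg_part x = 0" for x :: "'a::{lattice,ordered_ab_group_add}"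
  unfolding neg_part_def by (simp add: inf_absorb2)

lemma pos_of_nonpos: "x \<le> 0 \<Longrightarrow> pos_part x = 0" for x :: "'a::{lattice,ordered_ab_group_add}"
  unfolding pos_part_def by (simp add: sup_absorb2)

lemma neg_eq_pos_uminus: "neg_part x = pos_part (-x)" for x :: "'a::{lattice,ordered_ab_group_add}"
  unfolding neg_part_def pos_part_def by (simp add: neg_inf_l)

lemma diff_inf_l: "x - inf x y = pos_part (x - y)" for x :: "'a::{lattice,ordered_ab_group_add}"
proof -
  have "x - inf x y = x + sup (-x) (-y)" by (simp add: neg_inf_l[symmetric])
  also have "\<dots> = sup 0 (x - y)" by (simp add: add_sup_l)
  finally show ?thesis by (simp add: pos_part_def sup_commute)
qed

lemma sup_eq_l: "sup x y = y + pos_part (x - y)" for x :: "'a::{lattice,ordered_ab_group_add}"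
  unfolding pos_part_def by (simp add: add_sup_l sup_commute)

lemma pos_subadd: "pos_part (x + y) \<le> pos_part x + pos_part y" for x :: "'a::{lattice,ordered_ab_group_add}"
  unfolding pos_part_def
  by (rule sup_least) (simp_all add: add_mono add_nonneg_nonneg)

lemma pos_mono: "x \<le> y \<Longrightarrow> pos_part x \<le> pos_part y" for x :: "'a::{lattice,ordered_ab_group_add}"
  unfolding pos_part_def by (meson le_supI1 order.refl sup_least sup.cobounded2 order_trans)

lemma pos_scale: "0 \<le> r \<Longrightarrow> pos_part (r *\<^sub>R x) = r *\<^sub>R pos_part x"
  for x :: "'a::{lattice,ordered_real_vector}"
proof (cases "r = 0")
  case True then show ?thesis by (simp add: pos_part_def)
next
  case False
  assume r: "0 \<le> r"
  then have r0: "0 < r" using False by simp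
  show ?thesis unfolding pos_part_def
  proof (rule antisym)
    show "sup (r *\<^sub>R x) 0 \<le> r *\<^sub>R sup x 0"
      by (rule sup_least) (simp_all add: scaleR_left_mono r scaleR_nonneg_nonneg)
    have "sup x 0 \<le> (1/r) *\<^sub>R sup (r *\<^sub>R x) 0"
    proof (rule sup_least)
      have "(1/r) *\<^sub>R (r *\<^sub>R x) \<le> (1/r) *\<^sub>R sup (r *\<^sub>R x) 0"
        by (rule scaleR_left_mono) (simp_all add: r)
      then show "x \<le> (1/r) *\<^sub>R sup (r *\<^sub>R x) 0" using r0 by simp
      show "0 \<le> (1/r) *\<^sub>R sup (r *\<^sub>R x) 0" by (rule scaleR_nonneg_nonneg) (simp_all add: r)
    qed
    then have "r *\<^sub>R sup x 0 \<le> r *\<^sub>R ((1/r) *\<^sub>R sup (r *\<^sub>R x) 0)"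
      by (rule scaleR_left_mono) (simp add: r)
    then show "r *\<^sub>R sup x 0 \<le> sup (r *\<^sub>R x) 0" using r0 by simp
  qed
qed

lemma riesz_decomp:
  fixes \<psi> :: "'a::{lattice,ordered_ab_group_add}"
  assumes "\<psi> \<le> \<phi>1 + \<phi>2" "0 \<le> \<phi>2"
  shows "\<psi> - inf \<psi> \<phi>1 \<le> \<phi>2"
proof -
  have "\<psi> \<le> inf (\<phi>2 + \<psi>) (\<phi>2 + \<phi>1)"
    using assms by (simp add: add.commute add_increasing)
  then have "\<psi> \<le> \<phi>2 + inf \<psi> \<phi>1" by (simp add: add_inf_l)
  then show ?thesis by (simp add: diff_le_eq add.commute)
qed

lemma lat_abs_nonneg: "0 \<le> x \<Longrightarrow> lat_abs x = x" for x :: "'a::{lattice,ordered_ab_group_add}"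
  unfolding lat_abs_def by (simp add: pos_of_nonneg neg_of_nonneg)

lemma pos_le_abs: "pos_part x \<le> lat_abs x" for x :: "'a::{lattice,ordered_ab_group_add}"
  unfolding lat_abs_def using neg_ge0[of x] by (simp add: add_increasing2)

lemma neg_le_abs: "neg_part x \<le> lat_abs x" for x :: "'a::{lattice,ordered_ab_group_add}"
  unfolding lat_abs_def using pos_ge0[of x] by (simp add: add_increasing)

context
  fixes T :: "'a::{banach,lattice,ordered_real_vector} itself"
  assumes BL: "banach_lattice T"
begin

lemma BLD: "lat_abs x \<le> lat_abs y \<Longrightarrow> norm x \<le> norm y" for x y :: 'a
  using BL unfolding banach_lattice_def by blast

lemma norm_mono_pos: "0 \<le> x \<Longrightarrow> x \<le> y \<Longrightarrow> norm x \<le> norm y" for x y :: 'a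
  by (rule BLD) (simp add: lat_abs_nonneg)

lemma norm_pos_le: "norm (pos_part x) \<le> norm x" for x :: 'a
  by (rule BLD) (simp add: lat_abs_nonneg pos_ge0 pos_le_abs)

lemma norm_neg_le: "norm (neg_part x) \<le> norm x" for x :: 'a
  by (rule BLD) (simp add: lat_abs_nonneg neg_ge0 neg_le_abs)

end

lemma cone_ext:
  fixes p0 :: "'a::{banach,lattice,ordered_real_vector} \<Rightarrow> real"
  assumes BL: "banach_lattice TYPE('a)"
    and add: "\<And>a b. 0 \<le> a \<Longrightarrow> 0 \<le> b \<Longrightarrow> p0 (a+b) = p0 a + p0 b"
    and hom: "\<And>r a. 0 \<le> r \<Longrightarrow> 0 \<le> a \<Longrightarrow> p0 (r *\<^sub>R a) = r * p0 a"
    and bnd: "\<And>a. 0 \<le> a \<Longrightarrow> \<bar>p0 a\<bar> \<le> C * norm a"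
  shows "\<exists>P. \<forall>a. 0 \<le> a \<longrightarrow> blinfun_apply P a = p0 a"
proof -
  define p where "p x = p0 (pos_part x) - p0 (neg_part x)" for x
  have key: "p0 a - p0 b = p0 c - p0 e" if "0\<le>a" "0\<le>b" "0\<le>c" "0\<le>e" "a - b = c - e" for a b c e
  proof -
    have "a + e = c + b" using that(5) by (simp add: algebra_simps)
    then have "p0 (a + e) = p0 (c + b)" by simp
    then show ?thesis using add that by simp
  qed
  have pgen: "p x = p0 a - p0 b" if "0\<le>a" "0\<le>b" "x = a - b" for x a b
    unfolding p_def using key[of "pos_part x" "neg_part x" a b] that pos_ge0 neg_ge0 pos_minus_neg by metis
  have p00: "p0 0 = 0" using add[of 0 0] by simp
  have padd: "p (x+y) = p x + p y" for x y
  proof -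
    have "p (x+y) = p0 (pos_part x + pos_part y) - p0 (neg_part x + neg_part y)"
    proof (rule pgen)
      show "x + y = pos_part x + pos_part y - (neg_part x + neg_part y)"
        using pos_minus_neg[of x] pos_minus_neg[of y] by (simp add: algebra_simps)
    qed (simp_all add: pos_ge0 neg_ge0 add_nonneg_nonneg)
    then show ?thesis using add[OF pos_ge0 pos_ge0, of x y] add[OF neg_ge0 neg_ge0, of x y] p_def by simp
  qed
  have pscale: "p (r *\<^sub>R x) = r * p x" for r x
  proof (cases "0 \<le> r")
    case True
    have "p (r *\<^sub>R x) = p0 (r *\<^sub>R pos_part x) - p0 (r *\<^sub>R neg_part x)"
    proof (rule pgen)
      show "r *\<^sub>R x = r *\<^sub>R pos_part x - r *\<^sub>R neg_part x"
        using pos_minus_neg[of x] by (metis scaleR_diff_right)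
    qed (simp_all add: pos_ge0 neg_ge0 scaleR_nonneg_nonneg True)
    moreover have "p x = p0 (pos_part x) - p0 (neg_part x)" by (rule p_def)
    ultimately show ?thesis using hom[OF True pos_ge0, of x] hom[OF True neg_ge0, of x] by (simp add: right_diff_distrib)
  next
    case False
    have "p (r *\<^sub>R x) = p0 ((-r) *\<^sub>R neg_part x) - p0 ((-r) *\<^sub>R pos_part x)"
    proof (rule pgen)
      show "r *\<^sub>R x = (-r) *\<^sub>R neg_part x - (-r) *\<^sub>R pos_part x"
        using pos_minus_neg[of x] by (metis minus_diff_eq scaleR_diff_right scaleR_minus_left)
    qed (use False in \<open>simp_all add: pos_ge0 neg_ge0 scaleR_nonpos_nonneg\<close>)
    moreover have "p x = p0 (pos_part x) - p0 (neg_part x)" by (rule p_def)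
    moreover have "0 \<le> -r" using False by simp
    ultimately show ?thesis using hom[OF \<open>0 \<le> -r\<close> pos_ge0, of x] hom[OF \<open>0 \<le> -r\<close> neg_ge0, of x] by (simp add: right_diff_distrib)
  qed
  have pbnd: "norm (p x) \<le> norm x * (2 * \<bar>C\<bar>)" for x
  proof -
    have "\<bar>p0 (pos_part x)\<bar> \<le> \<bar>C\<bar> * norm x"
    proof -
      have "\<bar>p0 (pos_part x)\<bar> \<le> C * norm (pos_part x)" using bnd pos_ge0 by blast
      also have "\<dots> \<le> \<bar>C\<bar> * norm (pos_part x)" by (simp add: mult_right_mono)
      also have "\<dots> \<le> \<bar>C\<bar> * norm x" using norm_pos_le[OF BL] by (simp add: mult_left_mono)
      finally show ?thesis .
    qed
    moreover have "\<bar>p0 (neg_part x)\<bar> \<le> \<bar>C\<bar> * norm x"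
    proof -
      have "\<bar>p0 (neg_part x)\<bar> \<le> C * norm (neg_part x)" using bnd neg_ge0 by blast
      also have "\<dots> \<le> \<bar>C\<bar> * norm (neg_part x)" by (simp add: mult_right_mono)
      also have "\<dots> \<le> \<bar>C\<bar> * norm x" using norm_neg_le[OF BL] by (simp add: mult_left_mono)
      finally show ?thesis .
    qed
    ultimately show ?thesis unfolding p_def by (simp add: abs_le_iff algebra_simps)
  qed
  have bl: "bounded_linear p"
    by (rule bounded_linear_intro[OF padd _ pbnd]) (simp add: pscale)
  have "\<forall>a. 0 \<le> a \<longrightarrow> blinfun_apply (Blinfun p) a = p0 a"
  proof (intro allI impI)
    fix a :: 'a assume "0 \<le> a"
    then have "p a = p0 a - p0 0" by (intro pgen) simp_all
    then show "blinfun_apply (Blinfun p) a = p0 a" using bounded_linear_Blinfun_apply[OF bl] p00 by simp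
  qed
  then show ?thesis by blast
qed

lemma dual_le_antisym:
  fixes p q :: "'a::{banach,lattice,ordered_real_vector} \<Rightarrow>\<^sub>L real"
  assumes "dual_le p q" "dual_le q p" shows "p = q"
proof (rule blinfun_eqI)
  fix x :: 'a
  have e: "x = pos_part x - neg_part x" using pos_minus_neg[of x] by simp
  have "blinfun_apply p (pos_part x) = blinfun_apply q (pos_part x)"
    using assms pos_ge0 unfolding dual_le_def by (meson antisym)
  moreover have "blinfun_apply p (neg_part x) = blinfun_apply q (neg_part x)"
    using assms neg_ge0 unfolding dual_le_def by (meson antisym)
  ultimately show "blinfun_apply p x = blinfun_apply q x"
    by (subst (1 2) e) (simp add: blinfun.diff_right)
qed

lemma dual_sup_exists:
  fixes \<delta> :: "'a::{banach,lattice,ordered_real_vector} \<Rightarrow>\<^sub>L real"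
  assumes BL: "banach_lattice TYPE('a)"
  shows "\<exists>P. dual_le \<delta> P \<and> dual_le 0 P \<and> (\<forall>q. dual_le \<delta> q \<and> dual_le 0 q \<longrightarrow> dual_le P q)"
proof -
  define S where "S \<phi> = {blinfun_apply \<delta> \<psi> | \<psi>. 0 \<le> \<psi> \<and> \<psi> \<le> \<phi>}" for \<phi>
  define p0 where "p0 \<phi> = Sup (S \<phi>)" for \<phi>
  have ne: "S \<phi> \<noteq> {}" if "0 \<le> \<phi>" for \<phi>
  proof -
    have "blinfun_apply \<delta> 0 \<in> S \<phi>" unfolding S_def using that by blast
    then show ?thesis by blast
  qed
  have sb: "blinfun_apply \<delta> \<psi> \<le> norm \<delta> * norm \<phi>" if "0 \<le> \<psi>" "\<psi> \<le> \<phi>" for \<psi> \<phi>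
  proof -
    have "blinfun_apply \<delta> \<psi> \<le> norm \<delta> * norm \<psi>" using norm_blinfun[of \<delta> \<psi>] by simp
    also have "\<dots> \<le> norm \<delta> * norm \<phi>" using norm_mono_pos[OF BL that] by (simp add: mult_left_mono)
    finally show ?thesis .
  qed
  have bdd: "bdd_above (S \<phi>)" for \<phi>
    unfolding bdd_above_def S_def using sb by blast
  have upper: "blinfun_apply \<delta> \<psi> \<le> p0 \<phi>" if "0 \<le> \<psi>" "\<psi> \<le> \<phi>" for \<psi> \<phi>
    unfolding p0_def by (rule cSup_upper[OF _ bdd]) (use that in \<open>auto simp: S_def\<close>)
  have least: "p0 \<phi> \<le> M" if "0 \<le> \<phi>" "\<And>\<psi>. 0 \<le> \<psi> \<Longrightarrow> \<psi> \<le> \<phi> \<Longrightarrow> blinfun_apply \<delta> \<psi> \<le> M" for \<phi> M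
    unfolding p0_def by (rule cSup_least[OF ne[OF that(1)]]) (use that in \<open>auto simp: S_def\<close>)
  have p0pos: "0 \<le> p0 \<phi>" if "0 \<le> \<phi>" for \<phi> using upper[of 0 \<phi>] that by simp
  have p0bnd: "p0 \<phi> \<le> norm \<delta> * norm \<phi>" if "0 \<le> \<phi>" for \<phi> using least[OF that sb] by blast
  have add: "p0 (a+b) = p0 a + p0 b" if ab: "0 \<le> a" "0 \<le> b" for a b
  proof (rule antisym)
    show "p0 (a+b) \<le> p0 a + p0 b"
    proof (rule least)
      show "0 \<le> a + b" using ab by simp
      fix \<psi> assume \<psi>: "0 \<le> \<psi>" "\<psi> \<le> a + b"
      have 1: "0 \<le> inf \<psi> a" "inf \<psi> a \<le> a" using \<psi> ab by simp_all
      have 2: "0 \<le> \<psi> - inf \<psi> a" "\<psi> - inf \<psi> a \<le> b" using riesz_decomp[OF \<psi>(2) ab(2)] by simp_all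
      have "blinfun_apply \<delta> \<psi> = blinfun_apply \<delta> (inf \<psi> a) + blinfun_apply \<delta> (\<psi> - inf \<psi> a)"
        by (simp add: blinfun.diff_right)
      also have "\<dots> \<le> p0 a + p0 b" using upper[OF 1] upper[OF 2] by simp
      finally show "blinfun_apply \<delta> \<psi> \<le> p0 a + p0 b" .
    qed
    have "p0 a \<le> p0 (a+b) - p0 b"
    proof (rule least[OF ab(1)])
      fix \<psi>1 assume 1: "0 \<le> \<psi>1" "\<psi>1 \<le> a"
      have "p0 b \<le> p0 (a+b) - blinfun_apply \<delta> \<psi>1"
      proof (rule least[OF ab(2)])
        fix \<psi>2 assume 2: "0 \<le> \<psi>2" "\<psi>2 \<le> b"
        have "blinfun_apply \<delta> (\<psi>1 + \<psi>2) \<le> p0 (a+b)"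
          using 1 2 by (intro upper) (simp_all add: add_mono)
        then show "blinfun_apply \<delta> \<psi>2 \<le> p0 (a+b) - blinfun_apply \<delta> \<psi>1"
          by (simp add: blinfun.add_right)
      qed
      then show "blinfun_apply \<delta> \<psi>1 \<le> p0 (a+b) - p0 b" by simp
    qed
    then show "p0 a + p0 b \<le> p0 (a+b)" by simp
  qed
  have p00: "p0 0 = 0" using add[of 0 0] by simp
  have hom: "p0 (r *\<^sub>R a) = r * p0 a" if r: "0 \<le> r" and a: "0 \<le> a" for r a
  proof (cases "r = 0")
    case True then show ?thesis using p00 by simp
  next
    case False
    then have r0: "0 < r" using r by simp
    have ra: "0 \<le> r *\<^sub>R a" using r a by (simp add: scaleR_nonneg_nonneg)
    show ?thesis
    proof (rule antisym)
      show "p0 (r *\<^sub>R a) \<le> r * p0 a"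
      proof (rule least[OF ra])
        fix \<psi> assume \<psi>: "0 \<le> \<psi>" "\<psi> \<le> r *\<^sub>R a"
        have "0 \<le> (1/r) *\<^sub>R \<psi>" using \<psi> r0 by (simp add: scaleR_nonneg_nonneg)
        moreover have "(1/r) *\<^sub>R \<psi> \<le> a"
        proof -
          have "(1/r) *\<^sub>R \<psi> \<le> (1/r) *\<^sub>R (r *\<^sub>R a)" using \<psi>(2) r0 by (intro scaleR_left_mono) simp_all
          then show ?thesis using r0 by simp
        qed
        ultimately have "blinfun_apply \<delta> ((1/r) *\<^sub>R \<psi>) \<le> p0 a" by (rule upper)
        then have "(1/r) * blinfun_apply \<delta> \<psi> \<le> p0 a" by (simp add: blinfun.scaleR_right)
        then show "blinfun_apply \<delta> \<psi> \<le> r * p0 a" using r0 by (simp add: field_simps)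
      qed
      have "p0 a \<le> p0 (r *\<^sub>R a) / r"
      proof (rule least[OF a])
        fix \<psi> assume \<psi>: "0 \<le> \<psi>" "\<psi> \<le> a"
        have "blinfun_apply \<delta> (r *\<^sub>R \<psi>) \<le> p0 (r *\<^sub>R a)"
          using \<psi> r by (intro upper) (simp_all add: scaleR_nonneg_nonneg scaleR_left_mono)
        then have "r * blinfun_apply \<delta> \<psi> \<le> p0 (r *\<^sub>R a)" by (simp add: blinfun.scaleR_right)
        then show "blinfun_apply \<delta> \<psi> \<le> p0 (r *\<^sub>R a) / r" using r0 by (simp add: field_simps)
      qed
      then show "r * p0 a \<le> p0 (r *\<^sub>R a)" using r0 by (simp add: field_simps)
    qed
  qed
  have bnd: "\<bar>p0 a\<bar> \<le> norm \<delta> * norm a" if "0 \<le> a" for a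
    using p0pos[OF that] p0bnd[OF that] by simp
  obtain P where P: "\<And>a. 0 \<le> a \<Longrightarrow> blinfun_apply P a = p0 a"
    using cone_ext[OF BL add hom bnd] by blast
  have "dual_le \<delta> P" unfolding dual_le_def using P upper by simp
  moreover have "dual_le 0 P" unfolding dual_le_def using P p0pos by simp
  moreover have "dual_le P q" if q: "dual_le \<delta> q" "dual_le 0 q" for q
    unfolding dual_le_def
  proof (intro allI impI)
    fix \<phi> :: 'a assume \<phi>: "0 \<le> \<phi>"
    have "p0 \<phi> \<le> blinfun_apply q \<phi>"
    proof (rule least[OF \<phi>])
      fix \<psi> assume \<psi>: "0 \<le> \<psi>" "\<psi> \<le> \<phi>"
      have "blinfun_apply \<delta> \<psi> \<le> blinfun_apply q \<psi>" using q(1) \<psi> unfolding dual_le_def by blast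
      moreover have "0 \<le> blinfun_apply q (\<phi> - \<psi>)" using q(2) \<psi> unfolding dual_le_def by simp
      ultimately show "blinfun_apply \<delta> \<psi> \<le> blinfun_apply q \<phi>" by (simp add: blinfun.diff_right)
    qed
    then show "blinfun_apply P \<phi> \<le> blinfun_apply q \<phi>" using P[OF \<phi>] by simp
  qed
  ultimately show ?thesis by blast
qed

lemma dual_pos_spec:
  fixes \<delta> :: "'a::{banach,lattice,ordered_real_vector} \<Rightarrow>\<^sub>L real"
  assumes BL: "banach_lattice TYPE('a)"
  shows "dual_le \<delta> (dual_pos \<delta>)" "dual_le 0 (dual_pos \<delta>)"
    "\<And>q. dual_le \<delta> q \<Longrightarrow> dual_le 0 q \<Longrightarrow> dual_le (dual_pos \<delta>) q"
proof -
  have ex1: "\<exists>!P. dual_le \<delta> P \<and> dual_le 0 P \<and> (\<forall>q. dual_le \<delta> q \<and> dual_le 0 q \<longrightarrow> dual_le P q)"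
    using dual_sup_exists[OF BL, of \<delta>] dual_le_antisym by blast
  have "dual_le \<delta> (dual_pos \<delta>) \<and> dual_le 0 (dual_pos \<delta>) \<and>
      (\<forall>q. dual_le \<delta> q \<and> dual_le 0 q \<longrightarrow> dual_le (dual_pos \<delta>) q)"
    unfolding dual_pos_def by (rule theI'[OF ex1])
  then show "dual_le \<delta> (dual_pos \<delta>)" "dual_le 0 (dual_pos \<delta>)"
    "\<And>q. dual_le \<delta> q \<Longrightarrow> dual_le 0 q \<Longrightarrow> dual_le (dual_pos \<delta>) q" by blast+
qed

lemma ereal_fin: "(x::ereal) \<noteq> \<infinity> \<Longrightarrow> x \<noteq> -\<infinity> \<Longrightarrow> x = ereal (real_of_ereal x)"
  by (cases x) auto

lemma conj_lower:
  assumes "E x = ereal v"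
  shows "ereal (blinfun_apply \<mu> x - v) \<le> conj_fun E \<mu>"
proof -
  have "ereal (blinfun_apply \<mu> x) - E x \<le> conj_fun E \<mu>"
    unfolding conj_fun_def by (rule SUP_upper) simp
  then show ?thesis using assms by simp
qed

lemma conj_upper:
  assumes "\<And>x v. E x = ereal v \<Longrightarrow> blinfun_apply \<mu> x - v \<le> M" "\<And>x. E x \<noteq> -\<infinity>"
  shows "conj_fun E \<mu> \<le> ereal M"
  unfolding conj_fun_def
proof (rule SUP_least)
  fix x
  show "ereal (blinfun_apply \<mu> x) - E x \<le> ereal M"
  proof (cases "E x")
    case (real v) then show ?thesis using assms(1)[of x v] by simp
  next
    case PInf then show ?thesis by simp
  next
    case MInf then show ?thesis using assms(2) by simp
  qed
qed

lemma conj_not_minf: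
  assumes "proper_fun E" shows "conj_fun E \<mu> \<noteq> -\<infinity>"
proof -
  obtain x where "E x \<noteq> \<infinity>" using assms unfolding proper_fun_def by blast
  then obtain v where "E x = ereal v" using assms unfolding proper_fun_def by (cases "E x") auto
  then have "ereal (blinfun_apply \<mu> x - v) \<le> conj_fun E \<mu>" by (rule conj_lower)
  then show ?thesis by auto
qed

lemma conj_sum_le:
  assumes P1: "proper_fun E1" and P2: "proper_fun E2"
    and H: "\<And>x y v w. E1 x = ereal v \<Longrightarrow> E2 y = ereal w \<Longrightarrow>
        blinfun_apply \<nu>1 x - v + (blinfun_apply \<nu>2 y - w) \<le> c"
  shows "conj_fun E1 \<nu>1 + conj_fun E2 \<nu>2 \<le> ereal c"
proof -
  have n1: "\<And>x. E1 x \<noteq> -\<infinity>" and n2: "\<And>x. E2 x \<noteq> -\<infinity>"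
    using P1 P2 unfolding proper_fun_def by auto
  have B: "conj_fun E1 \<nu>1 \<le> ereal (c - (blinfun_apply \<nu>2 y - w))" if "E2 y = ereal w" for y w
  proof (rule conj_upper[OF _ n1])
    fix x v assume "E1 x = ereal v"
    from H[OF this that] show "blinfun_apply \<nu>1 x - v \<le> c - (blinfun_apply \<nu>2 y - w)" by simp
  qed
  obtain y0 where "E2 y0 \<noteq> \<infinity>" using P2 unfolding proper_fun_def by blast
  then obtain w0 where "E2 y0 = ereal w0" using n2 by (cases "E2 y0") auto
  from B[OF this] have "conj_fun E1 \<nu>1 \<noteq> \<infinity>" by auto
  then obtain f1 where f1: "conj_fun E1 \<nu>1 = ereal f1" using conj_not_minf[OF P1] by (cases "conj_fun E1 \<nu>1") auto
  have "conj_fun E2 \<nu>2 \<le> ereal (c - f1)"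
  proof (rule conj_upper[OF _ n2])
    fix y w assume "E2 y = ereal w"
    from B[OF this] f1 show "blinfun_apply \<nu>2 y - w \<le> c - f1" by simp
  qed
  then have "ereal f1 + conj_fun E2 \<nu>2 \<le> ereal f1 + ereal (c - f1)" by (rule add_left_mono)
  then show ?thesis using f1 by simp
qed

lemma inf_two:
  fixes A B :: "real set"
  assumes "A \<noteq> {}" "B \<noteq> {}" "bdd_below A" "bdd_below B" "0 < \<alpha>" "0 < \<beta>"
    and H: "\<And>a b. a \<in> A \<Longrightarrow> b \<in> B \<Longrightarrow> X \<le> \<alpha> * a + \<beta> * b"
  shows "X \<le> \<alpha> * Inf A + \<beta> * Inf B"
proof -
  have 1: "(X - \<beta> * b) / \<alpha> \<le> Inf A" if b: "b \<in> B" for b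
  proof (rule cInf_greatest[OF assms(1)])
    fix a assume "a \<in> A"
    from H[OF this b] show "(X - \<beta> * b) / \<alpha> \<le> a" using assms(5) by (simp add: field_simps)
  qed
  have "(X - \<alpha> * Inf A) / \<beta> \<le> Inf B"
  proof (rule cInf_greatest[OF assms(2)])
    fix b assume "b \<in> B"
    from 1[OF this] show "(X - \<alpha> * Inf A) / \<beta> \<le> b" using assms(5,6) by (simp add: field_simps)
  qed
  then show ?thesis using assms(6) by (simp add: field_simps)
qed

lemma conv_fin:
  assumes P: "proper_fun E" and C: "convex_fun E" and a: "E x = ereal a" and b: "E y = ereal b"
    and th: "0 < \<theta>" "\<theta> < 1"
  shows "\<exists>v. E ((1-\<theta>) *\<^sub>R x + \<theta> *\<^sub>R y) = ereal v \<and> v \<le> (1-\<theta>) * a + \<theta> * b"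
proof -
  have "E ((1-\<theta>) *\<^sub>R x + \<theta> *\<^sub>R y) \<le> ereal (1-\<theta>) * E x + ereal \<theta> * E y"
    using C th unfolding convex_fun_def by blast
  then have le: "E ((1-\<theta>) *\<^sub>R x + \<theta> *\<^sub>R y) \<le> ereal ((1-\<theta>) * a + \<theta> * b)" using a b by simp
  have "E ((1-\<theta>) *\<^sub>R x + \<theta> *\<^sub>R y) \<noteq> -\<infinity>" using P unfolding proper_fun_def by blast
  with le show ?thesis by (cases "E ((1-\<theta>) *\<^sub>R x + \<theta> *\<^sub>R y)") auto
qed

lemma main_Q:
  fixes E1 E2 :: "'a::{banach,lattice,ordered_real_vector} \<Rightarrow> ereal"
  assumes BL: "banach_lattice TYPE('a)"
    and P1: "proper_fun E1" and C1: "convex_fun E1"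
    and P2: "proper_fun E2" and C2: "convex_fun E2" and PR: "P_rel E1 E2"
  shows "Q_rel (conj_fun E2) (conj_fun E1)"
  unfolding Q_rel_def
proof (intro allI impI)
  fix \<mu>1 \<mu>2 t21 :: "'a \<Rightarrow>\<^sub>L real"
  assume "dual_le 0 t21 \<and> dual_le t21 (dual_pos (\<mu>2 - \<mu>1))"
  then have t0: "dual_le 0 t21" and tP: "dual_le t21 (dual_pos (\<mu>2 - \<mu>1))" by auto
  define \<delta> where "\<delta> = \<mu>2 - \<mu>1"
  define P where "P = dual_pos \<delta>"
  define N where "N = dual_pos (\<mu>1 - \<mu>2)"
  have N0: "dual_le 0 N" unfolding N_def by (rule dual_pos_spec(2)[OF BL])
  have Nd: "dual_le (\<mu>1 - \<mu>2) N" unfolding N_def by (rule dual_pos_spec(1)[OF BL])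
  have PdN: "dual_le P (\<delta> + N)" unfolding P_def
  proof (rule dual_pos_spec(3)[OF BL])
    show "dual_le \<delta> (\<delta> + N)" using N0 unfolding dual_le_def by (simp add: blinfun.add_left)
    show "dual_le 0 (\<delta> + N)" using Nd unfolding dual_le_def \<delta>_def
      by (simp add: blinfun.add_left blinfun.diff_left) (smt (verit))
  qed
  have tPd: "dual_le t21 P" using tP by (simp add: P_def \<delta>_def)
  have Npos: "0 \<le> blinfun_apply N v" if "0 \<le> v" for v using N0 that unfolding dual_le_def by simp
  have Nmono: "blinfun_apply N v \<le> blinfun_apply N w" if "v \<le> w" for v w
    using Npos[of "w - v"] that by (simp add: blinfun.diff_right)
  define s where "s v = blinfun_apply N (pos_part v)" for v
  have s_sub: "s (v + w) \<le> s v + s w" for v w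
    unfolding s_def using Nmono[OF pos_subadd[of v w]] by (simp add: blinfun.add_right)
  have s_hom: "s (r *\<^sub>R v) = r * s v" if "0 \<le> r" for r v
    unfolding s_def pos_scale[OF that, of v] by (simp add: blinfun.scaleR_right)
  have s_bnd: "s v \<le> norm N * norm v" for v
  proof -
    have "s v \<le> norm N * norm (pos_part v)" unfolding s_def using norm_blinfun[of N "pos_part v"] by simp
    also have "\<dots> \<le> norm N * norm v" using norm_pos_le[OF BL, of v] by (simp add: mult_left_mono)
    finally show ?thesis .
  qed
  have s0: "s 0 = 0" unfolding s_def pos_part_def by simp
  have s_conv: "s ((1-\<theta>) *\<^sub>R v + \<theta> *\<^sub>R w) \<le> (1-\<theta>) * s v + \<theta> * s w" if "0 < \<theta>" "\<theta> < 1" for \<theta> v w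
    using s_sub[of "(1-\<theta>) *\<^sub>R v" "\<theta> *\<^sub>R w"] s_hom[of "1-\<theta>" v] s_hom[of \<theta> w] that by simp
  show "\<exists>t12. dual_le 0 t12 \<and> dual_le t12 (dual_pos (\<mu>1 - \<mu>2)) \<and>
      conj_fun E1 (\<mu>1 + t21 - t12) + conj_fun E2 (\<mu>2 - t21 + t12) \<le> conj_fun E1 \<mu>1 + conj_fun E2 \<mu>2"
  proof (cases "conj_fun E1 \<mu>1 + conj_fun E2 \<mu>2 = \<infinity>")
    case True
    have "dual_le 0 (0::'a \<Rightarrow>\<^sub>L real)" unfolding dual_le_def by simp
    moreover have "dual_le 0 (dual_pos (\<mu>1 - \<mu>2))" using N0 unfolding N_def .
    moreover have "conj_fun E1 (\<mu>1 + t21 - 0) + conj_fun E2 (\<mu>2 - t21 + 0) \<le> conj_fun E1 \<mu>1 + conj_fun E2 \<mu>2"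
      using True by (metis ereal_less_eq(1))
    ultimately show ?thesis by blast
  next
    case False
    have m1: "conj_fun E1 \<mu>1 \<noteq> -\<infinity>" by (rule conj_not_minf[OF P1])
    have m2: "conj_fun E2 \<mu>2 \<noteq> -\<infinity>" by (rule conj_not_minf[OF P2])
    obtain c1 where c1: "conj_fun E1 \<mu>1 = ereal c1"
      using False m1 m2 by (cases "conj_fun E1 \<mu>1") auto
    obtain c2 where c2: "conj_fun E2 \<mu>2 = ereal c2"
      using False m1 m2 c1 by (cases "conj_fun E2 \<mu>2") auto
    define c where "c = c1 + c2"
    define G where "G x y v w = blinfun_apply \<mu>1 x + blinfun_apply \<mu>2 y + blinfun_apply t21 (x - y) - v - w"
      for x y v w
    have nm1: "E1 x \<noteq> -\<infinity>" for x using P1 unfolding proper_fun_def by blast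
    have nm2: "E2 x \<noteq> -\<infinity>" for x using P2 unfolding proper_fun_def by blast
    have perpsi: "G x y v w - c \<le> s (x - y)" if xv: "E1 x = ereal v" and yw: "E2 y = ereal w" for x y v w
    proof -
      define a where "a = inf x y"
      define b where "b = sup x y"
      define u where "u = pos_part (x - y)"
      have "E1 a + E2 b \<le> E1 x + E2 y" using PR unfolding P_rel_def a_def b_def by blast
      then have le: "E1 a + E2 b \<le> ereal (v + w)" using xv yw by simp
      obtain va where va: "E1 a = ereal va" using le nm1[of a] nm2[of b]
        by (cases "E1 a"; cases "E2 b") auto
      obtain wb where wb: "E2 b = ereal wb" using le nm1[of a] nm2[of b]
        by (cases "E1 a"; cases "E2 b") auto
      have vw: "va + wb \<le> v + w" using le va wb by simp
      have ca: "blinfun_apply \<mu>1 a - va \<le> c1" using conj_lower[of E1 a va \<mu>1, OF va] c1 by simp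
      have cb: "blinfun_apply \<mu>2 b - wb \<le> c2" using conj_lower[of E2 b wb \<mu>2, OF wb] c2 by simp
      have u0: "0 \<le> u" unfolding u_def by (rule pos_ge0)
      have xa: "x = a + u" unfolding a_def u_def using diff_inf_l[of x y] by (simp add: algebra_simps)
      have by': "b = y + u" unfolding b_def u_def by (rule sup_eq_l)
      have xy: "x - y = u - neg_part (x - y)" unfolding u_def using pos_minus_neg[of "x - y"] by simp
      have t1: "blinfun_apply t21 (x - y) \<le> blinfun_apply t21 u"
        using t0 neg_ge0[of "x - y"] unfolding dual_le_def by (subst xy) (simp add: blinfun.diff_right)
      have t2: "blinfun_apply t21 u \<le> blinfun_apply P u" using tPd u0 unfolding dual_le_def by blast
      have t3: "blinfun_apply P u \<le> blinfun_apply \<mu>2 u - blinfun_apply \<mu>1 u + blinfun_apply N u"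
        using PdN u0 unfolding dual_le_def \<delta>_def by (simp add: blinfun.add_left blinfun.diff_left)
      have e1: "blinfun_apply \<mu>1 x = blinfun_apply \<mu>1 a + blinfun_apply \<mu>1 u"
        by (subst xa) (simp add: blinfun.add_right)
      have e2: "blinfun_apply \<mu>2 b = blinfun_apply \<mu>2 y + blinfun_apply \<mu>2 u"
        by (subst by') (simp add: blinfun.add_right)
      have "s (x - y) = blinfun_apply N u" unfolding s_def u_def ..
      then show ?thesis unfolding G_def c_def using vw ca cb t1 t2 t3 e1 e2 by linarith
    qed
    define V where "V z x y v w = s (z + (x - y)) - G x y v w + c" for z x y v w
    define T where "T z = {V z x y v w | x y v w. E1 x = ereal v \<and> E2 y = ereal w}" for z
    define p where "p z = Inf (T z)" for z
    obtain x0 v0 where x0: "E1 x0 = ereal v0"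
      using P1 nm1 unfolding proper_fun_def by (metis ereal_fin)
    obtain y0 w0 where y0: "E2 y0 = ereal w0"
      using P2 nm2 unfolding proper_fun_def by (metis ereal_fin)
    have Tne: "T z \<noteq> {}" for z unfolding T_def using x0 y0 by blast
    have Vlow: "- s (- z) \<le> V z x y v w" if "E1 x = ereal v" "E2 y = ereal w" for z x y v w
    proof -
      have "s (x - y) \<le> s (z + (x - y)) + s (- z)" using s_sub[of "z + (x - y)" "- z"] by simp
      then show ?thesis using perpsi[OF that] unfolding V_def by linarith
    qed
    have Tbdd: "bdd_below (T z)" for z
      unfolding bdd_below_def T_def using Vlow by blast
    have p_low: "p z \<le> V z x y v w" if "E1 x = ereal v" "E2 y = ereal w" for z x y v w
      unfolding p_def by (rule cInf_lower[OF _ Tbdd]) (use that in \<open>auto simp: T_def\<close>)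
    have p0: "0 \<le> p 0" unfolding p_def
    proof (rule cInf_greatest[OF Tne])
      fix r assume "r \<in> T 0"
      then obtain x y v w where r: "r = V 0 x y v w" "E1 x = ereal v" "E2 y = ereal w" unfolding T_def by blast
      show "0 \<le> r" using perpsi[OF r(2,3)] unfolding r(1) V_def by simp
    qed
    have pconv: "\<forall>z z' \<theta>. 0 < \<theta> \<longrightarrow> \<theta> < 1 \<longrightarrow> p ((1-\<theta>) *\<^sub>R z + \<theta> *\<^sub>R z') \<le> (1-\<theta>) * p z + \<theta> * p z'"
    proof (intro allI impI)
      fix z z' :: 'a and \<theta> :: real assume th: "0 < \<theta>" "\<theta> < 1"
      show "p ((1-\<theta>) *\<^sub>R z + \<theta> *\<^sub>R z') \<le> (1-\<theta>) * p z + \<theta> * p z'"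
        unfolding p_def[of z] p_def[of z']
      proof (rule inf_two[OF Tne Tne Tbdd Tbdd])
        show "0 < 1 - \<theta>" "0 < \<theta>" using th by auto
        fix r r' assume "r \<in> T z" "r' \<in> T z'"
        then obtain x y v w x' y' v' w' where r: "r = V z x y v w" "E1 x = ereal v" "E2 y = ereal w"
          and r': "r' = V z' x' y' v' w'" "E1 x' = ereal v'" "E2 y' = ereal w'" unfolding T_def by blast
        obtain v'' where v'': "E1 ((1-\<theta>) *\<^sub>R x + \<theta> *\<^sub>R x') = ereal v''" "v'' \<le> (1-\<theta>) * v + \<theta> * v'"
          using conv_fin[OF P1 C1 r(2) r'(2) th] by blast
        obtain w'' where w'': "E2 ((1-\<theta>) *\<^sub>R y + \<theta> *\<^sub>R y') = ereal w''" "w'' \<le> (1-\<theta>) * w + \<theta> * w'"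
          using conv_fin[OF P2 C2 r(3) r'(3) th] by blast
        define x'' where "x'' = (1-\<theta>) *\<^sub>R x + \<theta> *\<^sub>R x'"
        define y'' where "y'' = (1-\<theta>) *\<^sub>R y + \<theta> *\<^sub>R y'"
        have "p ((1-\<theta>) *\<^sub>R z + \<theta> *\<^sub>R z') \<le> V ((1-\<theta>) *\<^sub>R z + \<theta> *\<^sub>R z') x'' y'' v'' w''"
          using p_low v''(1) w''(1) unfolding x''_def y''_def by blast
        also have "\<dots> \<le> (1-\<theta>) * r + \<theta> * r'"
        proof -
          have veq: "(1-\<theta>) *\<^sub>R z + \<theta> *\<^sub>R z' + (x'' - y'') = (1-\<theta>) *\<^sub>R (z + (x - y)) + \<theta> *\<^sub>R (z' + (x' - y'))"
            unfolding x''_def y''_def by (simp add: algebra_simps)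
          have sle: "s ((1-\<theta>) *\<^sub>R z + \<theta> *\<^sub>R z' + (x'' - y'')) \<le> (1-\<theta>) * s (z + (x - y)) + \<theta> * s (z' + (x' - y'))"
            unfolding veq by (rule s_conv[OF th])
          have geq: "G x'' y'' v'' w'' \<ge> (1-\<theta>) * G x y v w + \<theta> * G x' y' v' w'"
          proof -
            have l1: "blinfun_apply \<mu>1 x'' = (1-\<theta>) * blinfun_apply \<mu>1 x + \<theta> * blinfun_apply \<mu>1 x'"
              unfolding x''_def by (simp add: blinfun.add_right blinfun.scaleR_right)
            have l2: "blinfun_apply \<mu>2 y'' = (1-\<theta>) * blinfun_apply \<mu>2 y + \<theta> * blinfun_apply \<mu>2 y'"
              unfolding y''_def by (simp add: blinfun.add_right blinfun.scaleR_right)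
            have l3: "blinfun_apply t21 (x'' - y'') = (1-\<theta>) * blinfun_apply t21 (x - y) + \<theta> * blinfun_apply t21 (x' - y')"
            proof -
              have "x'' - y'' = (1-\<theta>) *\<^sub>R (x - y) + \<theta> *\<^sub>R (x' - y')"
                unfolding x''_def y''_def by (simp add: algebra_simps)
              then show ?thesis by (simp add: blinfun.add_right blinfun.scaleR_right)
            qed
            show ?thesis unfolding G_def using l1 l2 l3 v''(2) w''(2) by (simp add: algebra_simps)
          qed
          show ?thesis unfolding r(1) r'(1) V_def using sle geq by (simp add: algebra_simps)
        qed
        finally show "p ((1-\<theta>) *\<^sub>R z + \<theta> *\<^sub>R z') \<le> (1-\<theta>) * r + \<theta> * r'" .
      qed
    qed
    obtain f where fadd: "\<And>x y. f (x+y) = f x + f y" and fhom: "\<And>r x. f (r *\<^sub>R x) = r * f x"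
      and fp: "\<And>x. f x \<le> p x"
      using hahn_banach_convex[OF pconv p0] by blast
    have fneg: "f (- x) = - f x" for x using fhom[of "-1" x] by simp
    have fdiff: "f (x - y) = f x - f y" for x y using fadd[of "x - y" y] by simp
    have f_le_s: "f x \<le> s x" for x
    proof (rule ccontr)
      assume "\<not> f x \<le> s x"
      then have gap: "0 < f x - s x" by simp
      define K where "K = s (x0 - y0) - G x0 y0 v0 w0 + c"
      define n where "n = (\<bar>K\<bar> + 1) / (f x - s x)"
      have n0: "0 < n" unfolding n_def using gap by simp
      have "n * f x = f (n *\<^sub>R x)" by (simp add: fhom)
      also have "\<dots> \<le> p (n *\<^sub>R x)" by (rule fp)
      also have "\<dots> \<le> V (n *\<^sub>R x) x0 y0 v0 w0" by (rule p_low[OF x0 y0])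
      also have "\<dots> \<le> n * s x + K"
        unfolding V_def K_def using s_sub[of "n *\<^sub>R x" "x0 - y0"] s_hom[of n x] n0 by simp
      finally have "n * (f x - s x) \<le> K" by (simp add: algebra_simps)
      moreover have "n * (f x - s x) = \<bar>K\<bar> + 1" unfolding n_def using gap by simp
      ultimately show False by simp
    qed
    have f_ge: "G x y v w - c \<le> f (x - y)" if "E1 x = ereal v" "E2 y = ereal w" for x y v w
    proof -
      have "f (- (x - y)) \<le> p (- (x - y))" by (rule fp)
      also have "\<dots> \<le> V (- (x - y)) x y v w" by (rule p_low[OF that])
      also have "\<dots> = c - G x y v w" unfolding V_def using s0 by simp
      finally show ?thesis using fneg[of "x - y"] by simp
    qed
    have fbnd: "norm (f x) \<le> norm x * norm N" for x
    proof -
      have "f x \<le> norm N * norm x" using f_le_s[of x] s_bnd[of x] by simp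
      moreover have "- f x \<le> norm N * norm x" using f_le_s[of "- x"] s_bnd[of "- x"] fneg[of x] by simp
      ultimately show ?thesis by (simp add: abs_le_iff mult.commute)
    qed
    have bl: "bounded_linear f"
      by (rule bounded_linear_intro[OF fadd _ fbnd]) (simp add: fhom)
    define t12 where "t12 = Blinfun f"
    have t12f: "blinfun_apply t12 = f" unfolding t12_def by (rule bounded_linear_Blinfun_apply[OF bl])
    have d1: "dual_le 0 t12" unfolding dual_le_def t12f
    proof (intro allI impI)
      fix \<phi> :: 'a assume "0 \<le> \<phi>"
      then have "pos_part (- \<phi>) = 0" by (intro pos_of_nonpos) simp
      then have "f (- \<phi>) \<le> 0" using f_le_s[of "- \<phi>"] unfolding s_def by simp
      then show "blinfun_apply 0 \<phi> \<le> f \<phi>" using fneg[of \<phi>] by simp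
    qed
    have d2: "dual_le t12 (dual_pos (\<mu>1 - \<mu>2))" unfolding dual_le_def t12f N_def[symmetric]
    proof (intro allI impI)
      fix \<phi> :: 'a assume "0 \<le> \<phi>"
      then show "f \<phi> \<le> blinfun_apply N \<phi>" using f_le_s[of \<phi>] unfolding s_def by (simp add: pos_of_nonneg)
    qed
    have "conj_fun E1 (\<mu>1 + t21 - t12) + conj_fun E2 (\<mu>2 - t21 + t12) \<le> ereal c"
    proof (rule conj_sum_le[OF P1 P2])
      fix x y v w assume xy: "E1 x = ereal v" "E2 y = ereal w"
      have "blinfun_apply (\<mu>1 + t21 - t12) x - v + (blinfun_apply (\<mu>2 - t21 + t12) y - w)
          = G x y v w - f (x - y)"
        unfolding G_def fdiff by (simp add: blinfun.add_left blinfun.diff_left blinfun.diff_right t12f)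
      then show "blinfun_apply (\<mu>1 + t21 - t12) x - v + (blinfun_apply (\<mu>2 - t21 + t12) y - w) \<le> c"
        using f_ge[OF xy] by simp
    qed
    also have "ereal c = conj_fun E1 \<mu>1 + conj_fun E2 \<mu>2" using c1 c2 c_def by simp
    finally show ?thesis using d1 d2 by blast
  qed
qed

theorem theorem2p49:
  assumes "banach_lattice TYPE('a::{banach,lattice,ordered_real_vector})"
  shows "(\<forall>E1 E2 :: 'a \<Rightarrow> ereal.
            proper_fun E1 \<and> convex_fun E1 \<and> proper_fun E2 \<and> convex_fun E2 \<and> P_rel E1 E2
            \<longrightarrow> Q_rel (conj_fun E2) (conj_fun E1))
       \<and> (\<forall>E :: 'a \<Rightarrow> ereal.
            proper_fun E \<and> convex_fun E \<and> submodular E \<longrightarrow> substitutable (conj_fun E))"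
  using main_Q[OF assms] unfolding submodular_def substitutable_def by blast

end
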